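(* Let $G = \bigcap_{i \in \mathcal{I}} G_i$ be a nonempty domain in $\mathbb{R}^d$, where $\mathcal{I}=\{1,\dots,\mathbf{I}\}$ is a nonempty finite index set and for each $i \in \mathcal{I}$, $G_i$ is a nonempty domain, $G_i \neq \mathbb{R}^d$, whose boundary $\partial G_i$ is $C^1$, and let $n^i(\cdot)$ denote the unit normal vector field on $\partial G_i$ pointing into $G_i$. Let $\gamma^i:\mathbb{R}^d\to\mathbb{R}^d$, $i\in\mathcal{I}$, be vector fields, and for $x\in\mathbb{R}^d$ let $\mathcal{I}(x)=\{i\in\mathcal{I}: x\in\partial G_i\}$. Then there is a constant $a \in (0,1)$ and a vector valued function $b: \partial G \to \mathbb{R}_+^{\mathbf{I}}$ such that for each $x \in \partial G$, $\sum_{i \in \mathcal{I}(x)} b_i(x) = 1$ and for each $i \in \mathcal{I}(x)$, $$b_i(x)\langle n^i(x), \gamma^i(x)\rangle \ge a + \sum_{j \in \mathcal{I}(x)\setminus\{i\}} b_j(x)\,|\langle n^j(x), \gamma^i(x)\rangle|,$$ if and only if there is a constant $a \in (0,1)$ and a vector valued function $c: \partial G \to \mathbb{R}_+^{\mathbf{I}}$ such that for each $x \in \partial G$, $\sum_{i \in \mathcal{I}(x)} c_i(x) = 1$ and for each $i \in \mathcal{I}(x)$, $$c_i(x)\langle \gamma^i(x), n^i(x)\rangle \ge a + \sum_{j \in \mathcal{I}(x)\setminus\{i\}} c_j(x)\,|\langle \gamma^j(x), n^i(x)\rangle|.$$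
   Context: $\langle\cdot,\cdot\rangle$ is the Euclidean inner product on $\mathbb{R}^d$, $\mathbb{R}_+^{\mathbf{I}}$ is the nonnegative orthant, and $\partial G$ is the boundary of $G$. *)

theory Defs
  imports "HOL-Analysis.Analysis"
begin

definition is_domain :: "'a::euclidean_space set \<Rightarrow> bool" where
  "is_domain D \<longleftrightarrow> D \<noteq> {} \<and> open D \<and> connected D"

definition C1_boundary_inward_normal :: "'a::euclidean_space set \<Rightarrow> ('a \<Rightarrow> 'a) \<Rightarrow> bool" where
  "C1_boundary_inward_normal D n \<longleftrightarrow>
     (\<forall>x\<in>frontier D. \<exists>U \<phi> \<phi>'. open U \<and> x \<in> U \<and>
        (\<forall>y\<in>U. (\<phi> has_derivative (\<lambda>h. \<phi>' y \<bullet> h)) (at y)) \<and>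
        continuous_on U \<phi>' \<and> (\<forall>y\<in>U. \<phi>' y \<noteq> 0) \<and>
        D \<inter> U = {y\<in>U. \<phi> y > 0} \<and> frontier D \<inter> U = {y\<in>U. \<phi> y = 0} \<and>
        n x = (1 / norm (\<phi>' x)) *\<^sub>R \<phi>' x)"

definition active_idx :: "nat \<Rightarrow> (nat \<Rightarrow> 'a::topological_space set) \<Rightarrow> 'a \<Rightarrow> nat set" where
  "active_idx I G x = {i\<in>{1..I}. x \<in> frontier (G i)}"

end

theory Submission
  imports Defs
begin

lemma zelim:
  fixes A :: "nat \<Rightarrow> nat \<Rightarrow> real"
  assumes "finite J"
  shows "\<lbrakk>\<forall>i\<in>J. \<forall>j\<in>J. i \<noteq> j \<longrightarrow> A i j \<le> 0; \<forall>j\<in>J. c j \<ge> 0;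
          \<forall>i\<in>J. (\<Sum>j\<in>J. A i j * c j) > 0; \<forall>j\<in>J. r j \<ge> 0\<rbrakk> \<Longrightarrow>
         \<exists>y. (\<forall>i\<in>J. y i \<ge> 0) \<and> (\<forall>j\<in>J. (\<Sum>i\<in>J. y i * A i j) = r j)"
  using assms
proof (induction J arbitrary: A r rule: finite_induct)
  case empty
  then show ?case by auto
next
  case (insert k F)
  note off = insert.prems(1) and cnn = insert.prems(2) and pos = insert.prems(3) and rnn = insert.prems(4)
  have sF: "(\<Sum>j\<in>F. A k j * c j) \<le> 0"
    by (rule sum_nonpos) (use off cnn insert.hyps(2) in \<open>auto intro!: mult_nonpos_nonneg\<close>)
  have "(\<Sum>j\<in>insert k F. A k j * c j) = A k k * c k + (\<Sum>j\<in>F. A k j * c j)"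
    using insert.hyps by simp
  with pos sF have "A k k * c k > 0" by force
  with cnn have akk: "A k k > 0"
    by (metis insertI1 mult_nonpos_nonneg not_less)
  define A' where "A' i j = A i j - A i k * A k j / A k k" for i j
  define r' where "r' j = r j - r k * A k j / A k k" for j
  have h1: "\<forall>i\<in>F. \<forall>j\<in>F. i \<noteq> j \<longrightarrow> A' i j \<le> 0"
  proof (intro ballI impI)
    fix i j assume ij: "i \<in> F" "j \<in> F" "i \<noteq> j"
    have "A i k \<le> 0" "A k j \<le> 0" "A i j \<le> 0" using off ij insert.hyps(2) by auto
    hence "A i k * A k j / A k k \<ge> 0" using akk by (simp add: mult_nonpos_nonpos)
    thus "A' i j \<le> 0" using \<open>A i j \<le> 0\<close> unfolding A'_def by linarith
  qed
  have h2: "\<forall>j\<in>F. c j \<ge> 0" using cnn by auto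
  have h3: "\<forall>i\<in>F. (\<Sum>j\<in>F. A' i j * c j) > 0"
  proof
    fix i assume i: "i \<in> F"
    have "(\<Sum>j\<in>F. A' i j * c j) = (\<Sum>j\<in>F. A i j * c j) - A i k / A k k * (\<Sum>j\<in>F. A k j * c j)"
      unfolding A'_def by (simp add: sum_subtractf sum_distrib_left algebra_simps)
    also have "\<dots> = (\<Sum>j\<in>insert k F. A i j * c j) - A i k / A k k * (\<Sum>j\<in>insert k F. A k j * c j)"
      using insert.hyps akk by (simp add: algebra_simps)
    also have "\<dots> > 0"
    proof -
      have "A i k \<le> 0" using off i insert.hyps(2) by auto
      hence "A i k / A k k * (\<Sum>j\<in>insert k F. A k j * c j) \<le> 0"
        using akk pos by (intro mult_nonpos_nonneg divide_nonpos_pos) auto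
      thus ?thesis using pos i by force
    qed
    finally show "(\<Sum>j\<in>F. A' i j * c j) > 0" .
  qed
  have h4: "\<forall>j\<in>F. r' j \<ge> 0"
  proof
    fix j assume j: "j \<in> F"
    have "A k j \<le> 0" using off j insert.hyps(2) by auto
    hence "r k * A k j / A k k \<le> 0" using rnn akk by (simp add: mult_nonneg_nonpos divide_nonpos_pos)
    thus "r' j \<ge> 0" using rnn j unfolding r'_def by force
  qed
  obtain y where y0: "\<forall>i\<in>F. y i \<ge> 0" and ye: "\<forall>j\<in>F. (\<Sum>i\<in>F. y i * A' i j) = r' j"
    using insert.IH[OF h1 h2 h3 h4] by blast
  define yk where "yk = (r k - (\<Sum>i\<in>F. y i * A i k)) / A k k"
  define y' where "y' = y(k := yk)"
  have sFy: "(\<Sum>i\<in>F. y' i * B i) = (\<Sum>i\<in>F. y i * B i)" for B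
    using insert.hyps(2) unfolding y'_def by (intro sum.cong) auto
  have nk: "(\<Sum>i\<in>F. y i * A i k) \<le> 0"
    by (rule sum_nonpos) (use off y0 insert.hyps(2) in \<open>auto intro!: mult_nonneg_nonpos\<close>)
  have yk0: "yk \<ge> 0" unfolding yk_def using akk rnn nk by auto
  show ?case
  proof (intro exI conjI ballI)
    fix i assume "i \<in> insert k F" thus "y' i \<ge> 0" using y0 yk0 unfolding y'_def by auto
  next
    fix j assume j: "j \<in> insert k F"
    have S: "(\<Sum>i\<in>insert k F. y' i * A i j) = yk * A k j + (\<Sum>i\<in>F. y i * A i j)"
      using insert.hyps sFy by (simp add: y'_def)
    show "(\<Sum>i\<in>insert k F. y' i * A i j) = r j"
    proof (cases "j = k")
      case True
      thus ?thesis using S akk unfolding yk_def by (simp add: field_simps)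
    next
      case False
      with j have jF: "j \<in> F" by auto
      have "(\<Sum>i\<in>F. y i * A' i j) = (\<Sum>i\<in>F. y i * A i j) - A k j / A k k * (\<Sum>i\<in>F. y i * A i k)"
        unfolding A'_def by (simp add: sum_subtractf sum_distrib_left algebra_simps)
      with ye jF have "(\<Sum>i\<in>F. y i * A i j) = r' j + A k j / A k k * (\<Sum>i\<in>F. y i * A i k)" by auto
      hence T: "(\<Sum>i\<in>F. y i * A i j) = r j - r k * A k j / A k k + A k j / A k k * (\<Sum>i\<in>F. y i * A i k)"
        unfolding r'_def by simp
      have "yk * A k j = r k * A k j / A k k - A k j / A k k * (\<Sum>i\<in>F. y i * A i k)"
        unfolding yk_def by (simp add: diff_divide_distrib algebra_simps)
      thus ?thesis using S T by linarith
    qed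
  qed
qed

lemma zmain:
  fixes A :: "nat \<Rightarrow> nat \<Rightarrow> real"
  assumes fin: "finite J" and off: "\<forall>i\<in>J. \<forall>j\<in>J. i \<noteq> j \<longrightarrow> A i j \<le> 0"
    and cnn: "\<forall>j\<in>J. c j \<ge> 0" and c1: "(\<Sum>j\<in>J. c j) = 1" and a0: "a > 0"
    and row: "\<forall>i\<in>J. (\<Sum>j\<in>J. A i j * c j) \<ge> a"
  shows "\<exists>b. (\<forall>i\<in>J. b i \<ge> 0) \<and> (\<Sum>i\<in>J. b i) = 1 \<and> (\<forall>j\<in>J. (\<Sum>i\<in>J. b i * A i j) \<ge> a)"
proof -
  have "\<forall>i\<in>J. (\<Sum>j\<in>J. A i j * c j) > 0" using row a0 by force
  then obtain y where y0: "\<forall>i\<in>J. y i \<ge> 0" and ye: "\<forall>j\<in>J. (\<Sum>i\<in>J. y i * A i j) = 1"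
    using zelim[OF fin, of A c "\<lambda>_. 1"] off cnn by auto
  define s where "s = (\<Sum>i\<in>J. y i)"
  have key: "(\<Sum>i\<in>J. y i * (\<Sum>j\<in>J. A i j * c j)) = (\<Sum>j\<in>J. c j * (\<Sum>i\<in>J. y i * A i j))"
  proof -
    have "(\<Sum>i\<in>J. y i * (\<Sum>j\<in>J. A i j * c j)) = (\<Sum>i\<in>J. \<Sum>j\<in>J. y i * A i j * c j)"
      by (simp add: sum_distrib_left mult.assoc)
    also have "\<dots> = (\<Sum>j\<in>J. \<Sum>i\<in>J. y i * A i j * c j)" by (rule sum.swap)
    also have "\<dots> = (\<Sum>j\<in>J. c j * (\<Sum>i\<in>J. y i * A i j))"
      by (simp add: sum_distrib_left mult.commute)
    finally show ?thesis .
  qed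
  also have "\<dots> = 1" using ye c1 by simp
  finally have k1: "(\<Sum>i\<in>J. y i * (\<Sum>j\<in>J. A i j * c j)) = 1" .
  have "a * s = (\<Sum>i\<in>J. y i * a)" unfolding s_def by (simp add: sum_distrib_left mult_ac)
  also have "\<dots> \<le> (\<Sum>i\<in>J. y i * (\<Sum>j\<in>J. A i j * c j))"
    by (rule sum_mono) (use y0 row in \<open>auto intro: mult_left_mono\<close>)
  finally have as: "a * s \<le> 1" using k1 by simp
  have "J \<noteq> {}" using c1 by auto
  then obtain j0 where j0: "j0 \<in> J" by auto
  have "s \<noteq> 0"
  proof
    assume "s = 0"
    hence "\<forall>i\<in>J. y i = 0" using sum_nonneg_eq_0_iff[OF fin] y0 unfolding s_def by blast
    thus False using ye j0 by auto
  qed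
  moreover have "s \<ge> 0" unfolding s_def using y0 by (simp add: sum_nonneg)
  ultimately have sp: "s > 0" by simp
  show ?thesis
  proof (intro exI[of _ "\<lambda>i. y i / s"] conjI ballI)
    fix i assume "i \<in> J" thus "y i / s \<ge> 0" using y0 sp by simp
  next
    show "(\<Sum>i\<in>J. y i / s) = 1" using sp unfolding s_def by (simp add: sum_divide_distrib[symmetric])
  next
    fix j assume j: "j \<in> J"
    have "(\<Sum>i\<in>J. y i / s * A i j) = (\<Sum>i\<in>J. y i * A i j) / s"
      by (simp add: sum_divide_distrib)
    also have "\<dots> = 1 / s" using ye j by simp
    finally have X: "(\<Sum>i\<in>J. y i / s * A i j) = 1 / s" .
    have "a \<le> 1 / s" using as sp by (simp add: field_simps)
    thus "(\<Sum>i\<in>J. y i / s * A i j) \<ge> a" using X by simp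
  qed
qed

lemma rowform1:
  fixes P :: "nat \<Rightarrow> nat \<Rightarrow> real"
  assumes "finite J" "i \<in> J"
  shows "(\<Sum>j\<in>J. (if i = j then P i i else - \<bar>P i j\<bar>) * c j) = c i * P i i - (\<Sum>j\<in>J - {i}. c j * \<bar>P i j\<bar>)"
proof -
  have "(\<Sum>j\<in>J. (if i = j then P i i else - \<bar>P i j\<bar>) * c j)
     = P i i * c i + (\<Sum>j\<in>J - {i}. (if i = j then P i i else - \<bar>P i j\<bar>) * c j)"
    by (subst sum.remove[OF assms]) simp
  also have "(\<Sum>j\<in>J - {i}. (if i = j then P i i else - \<bar>P i j\<bar>) * c j) = - (\<Sum>j\<in>J - {i}. c j * \<bar>P i j\<bar>)"
    by (simp add: sum_negf[symmetric] mult_ac)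
  finally show ?thesis by (simp add: mult_ac)
qed

lemma rowform2:
  fixes P :: "nat \<Rightarrow> nat \<Rightarrow> real"
  assumes "finite J" "i \<in> J"
  shows "(\<Sum>j\<in>J. c j * (if j = i then P j j else - \<bar>P j i\<bar>)) = c i * P i i - (\<Sum>j\<in>J - {i}. c j * \<bar>P j i\<bar>)"
proof -
  have "(\<Sum>j\<in>J. c j * (if j = i then P j j else - \<bar>P j i\<bar>))
     = c i * P i i + (\<Sum>j\<in>J - {i}. c j * (if j = i then P j j else - \<bar>P j i\<bar>))"
    by (subst sum.remove[OF assms]) simp
  also have "(\<Sum>j\<in>J - {i}. c j * (if j = i then P j j else - \<bar>P j i\<bar>)) = - (\<Sum>j\<in>J - {i}. c j * \<bar>P j i\<bar>)"
    by (simp add: sum_negf[symmetric] mult_ac)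
  finally show ?thesis by (simp add: mult_ac)
qed

theorem lemma3p1:
  fixes I :: nat
    and G :: "nat \<Rightarrow> 'a::euclidean_space set"
    and n \<gamma> :: "nat \<Rightarrow> 'a \<Rightarrow> 'a"
  assumes "I \<ge> 1"
    and "is_domain (\<Inter>i\<in>{1..I}. G i)"
    and "\<And>i. i \<in> {1..I} \<Longrightarrow> is_domain (G i)"
    and "\<And>i. i \<in> {1..I} \<Longrightarrow> G i \<noteq> UNIV"
    and "\<And>i. i \<in> {1..I} \<Longrightarrow> C1_boundary_inward_normal (G i) (n i)"
  shows "(\<exists>a b. 0 < a \<and> a < 1 \<and>
            (\<forall>x\<in>frontier (\<Inter>i\<in>{1..I}. G i).
               (\<forall>i\<in>{1..I}. b x i \<ge> (0::real)) \<and>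
               (\<Sum>i\<in>active_idx I G x. b x i) = 1 \<and>
               (\<forall>i\<in>active_idx I G x.
                  b x i * (n i x \<bullet> \<gamma> i x) \<ge>
                  a + (\<Sum>j\<in>active_idx I G x - {i}. b x j * \<bar>n j x \<bullet> \<gamma> i x\<bar>))))
     \<longleftrightarrow>
         (\<exists>a c. 0 < a \<and> a < 1 \<and>
            (\<forall>x\<in>frontier (\<Inter>i\<in>{1..I}. G i).
               (\<forall>i\<in>{1..I}. c x i \<ge> (0::real)) \<and>
               (\<Sum>i\<in>active_idx I G x. c x i) = 1 \<and>
               (\<forall>i\<in>active_idx I G x.
                  c x i * (\<gamma> i x \<bullet> n i x) \<ge>
                  a + (\<Sum>j\<in>active_idx I G x - {i}. c x j * \<bar>\<gamma> j x \<bullet> n i x\<bar>))))"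
proof -
  let ?F = "frontier (\<Inter>i\<in>{1..I}. G i)"
  define J where "J x = active_idx I G x" for x
  have finJ: "finite (J x)" for x unfolding J_def active_idx_def by simp
  have Jsub: "J x \<subseteq> {1..I}" for x unfolding J_def active_idx_def by auto
  define P where "P x i j = \<gamma> j x \<bullet> n i x" for x i j
  define A where "A x i j = (if i = j then P x i i else - \<bar>P x i j\<bar>)" for x i j
  have offA: "\<forall>i\<in>J x. \<forall>j\<in>J x. i \<noteq> j \<longrightarrow> A x i j \<le> 0" for x unfolding A_def by auto
  have offAT: "\<forall>i\<in>J x. \<forall>j\<in>J x. i \<noteq> j \<longrightarrow> A x j i \<le> 0" for x unfolding A_def by auto
  have r1: "(\<Sum>j\<in>J x. c j * A x j i) = c i * (n i x \<bullet> \<gamma> i x) - (\<Sum>j\<in>J x - {i}. c j * \<bar>n j x \<bullet> \<gamma> i x\<bar>)"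
    if "i \<in> J x" for x i c
    using rowform2[OF finJ that, where P="P x" and c=c] unfolding A_def P_def by (simp add: inner_commute)
  have r2: "(\<Sum>j\<in>J x. A x i j * c j) = c i * (\<gamma> i x \<bullet> n i x) - (\<Sum>j\<in>J x - {i}. c j * \<bar>\<gamma> j x \<bullet> n i x\<bar>)"
    if "i \<in> J x" for x i c
    using rowform1[OF finJ that, where P="P x" and c=c] unfolding A_def P_def by simp
  show ?thesis
  proof
    assume "\<exists>a b. 0 < a \<and> a < 1 \<and>
            (\<forall>x\<in>?F. (\<forall>i\<in>{1..I}. b x i \<ge> (0::real)) \<and> (\<Sum>i\<in>active_idx I G x. b x i) = 1 \<and>
               (\<forall>i\<in>active_idx I G x. b x i * (n i x \<bullet> \<gamma> i x) \<ge>
                  a + (\<Sum>j\<in>active_idx I G x - {i}. b x j * \<bar>n j x \<bullet> \<gamma> i x\<bar>)))"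
    then obtain a b where a: "0 < a" "a < 1" and hb0: "\<forall>x\<in>?F. (\<forall>i\<in>{1..I}. b x i \<ge> (0::real)) \<and> (\<Sum>i\<in>J x. b x i) = 1 \<and>
               (\<forall>i\<in>J x. b x i * (n i x \<bullet> \<gamma> i x) \<ge>
                  a + (\<Sum>j\<in>J x - {i}. b x j * \<bar>n j x \<bullet> \<gamma> i x\<bar>))"
      unfolding J_def by blast
    have hb: "\<forall>x\<in>?F. (\<forall>i\<in>{1..I}. b x i \<ge> (0::real)) \<and> (\<Sum>i\<in>J x. b x i) = 1 \<and>
               (\<forall>i\<in>J x. (\<Sum>j\<in>J x. b x j * A x j i) \<ge> a)"
    proof (rule ballI, intro conjI)
      fix x assume x: "x \<in> ?F"
      show "\<forall>i\<in>{1..I}. b x i \<ge> (0::real)" "(\<Sum>i\<in>J x. b x i) = 1" using hb0 x by auto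
      show "\<forall>i\<in>J x. (\<Sum>j\<in>J x. b x j * A x j i) \<ge> a"
      proof
        fix i assume i: "i \<in> J x"
        show "(\<Sum>j\<in>J x. b x j * A x j i) \<ge> a" unfolding r1[OF i] using hb0 x i by fastforce
      qed
    qed
    have "\<forall>x\<in>?F. \<exists>c. (\<forall>i\<in>J x. c i \<ge> 0) \<and> (\<Sum>i\<in>J x. c i) = 1 \<and> (\<forall>j\<in>J x. (\<Sum>i\<in>J x. c i * A x j i) \<ge> a)"
    proof
      fix x assume x: "x \<in> ?F"
      show "\<exists>c. (\<forall>i\<in>J x. c i \<ge> 0) \<and> (\<Sum>i\<in>J x. c i) = 1 \<and> (\<forall>j\<in>J x. (\<Sum>i\<in>J x. c i * A x j i) \<ge> a)"
        apply (rule zmain[OF finJ offAT, of x "b x" a])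
        using hb x subsetD[OF Jsub[of x]] a by (auto simp: mult.commute)
    qed
    from bchoice[OF this] obtain c where hc: "\<forall>x\<in>?F. (\<forall>i\<in>J x. c x i \<ge> 0) \<and> (\<Sum>i\<in>J x. c x i) = 1 \<and> (\<forall>j\<in>J x. (\<Sum>i\<in>J x. c x i * A x j i) \<ge> a)"
      by blast
    define c' where "c' x i = (if i \<in> J x then c x i else 0)" for x i
    have "(\<Sum>i\<in>J x. c' x i * B i) = (\<Sum>i\<in>J x. c x i * B i)" for x B unfolding c'_def by simp
    show "\<exists>a c. 0 < a \<and> a < 1 \<and>
            (\<forall>x\<in>?F. (\<forall>i\<in>{1..I}. c x i \<ge> (0::real)) \<and> (\<Sum>i\<in>active_idx I G x. c x i) = 1 \<and>
               (\<forall>i\<in>active_idx I G x. c x i * (\<gamma> i x \<bullet> n i x) \<ge>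
                  a + (\<Sum>j\<in>active_idx I G x - {i}. c x j * \<bar>\<gamma> j x \<bullet> n i x\<bar>)))"
    proof (intro exI[of _ a] exI[of _ c'] conjI a, rule ballI, intro conjI)
      fix x assume x: "x \<in> ?F"
      show "\<forall>i\<in>{1..I}. c' x i \<ge> 0" using hc x unfolding c'_def by auto
      show "(\<Sum>i\<in>active_idx I G x. c' x i) = 1" using hc x unfolding c'_def J_def by simp
      show "\<forall>i\<in>active_idx I G x. c' x i * (\<gamma> i x \<bullet> n i x) \<ge>
                  a + (\<Sum>j\<in>active_idx I G x - {i}. c' x j * \<bar>\<gamma> j x \<bullet> n i x\<bar>)"
      proof
        fix i assume i: "i \<in> active_idx I G x"
        hence iJ: "i \<in> J x" unfolding J_def .
        have "a \<le> (\<Sum>j\<in>J x. A x i j * c' x j)" using hc x iJ unfolding c'_def by (simp add: mult.commute)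
        thus "c' x i * (\<gamma> i x \<bullet> n i x) \<ge> a + (\<Sum>j\<in>active_idx I G x - {i}. c' x j * \<bar>\<gamma> j x \<bullet> n i x\<bar>)"
          using r2[OF iJ] unfolding J_def by simp
      qed
    qed
next
    assume "\<exists>a c. 0 < a \<and> a < 1 \<and>
            (\<forall>x\<in>?F. (\<forall>i\<in>{1..I}. c x i \<ge> (0::real)) \<and> (\<Sum>i\<in>active_idx I G x. c x i) = 1 \<and>
               (\<forall>i\<in>active_idx I G x. c x i * (\<gamma> i x \<bullet> n i x) \<ge>
                  a + (\<Sum>j\<in>active_idx I G x - {i}. c x j * \<bar>\<gamma> j x \<bullet> n i x\<bar>)))"
    then obtain a c where a: "0 < a" "a < 1" and hc0: "\<forall>x\<in>?F. (\<forall>i\<in>{1..I}. c x i \<ge> (0::real)) \<and> (\<Sum>i\<in>J x. c x i) = 1 \<and>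
               (\<forall>i\<in>J x. c x i * (\<gamma> i x \<bullet> n i x) \<ge>
                  a + (\<Sum>j\<in>J x - {i}. c x j * \<bar>\<gamma> j x \<bullet> n i x\<bar>))"
      unfolding J_def by blast
    have hc: "\<forall>x\<in>?F. (\<forall>i\<in>{1..I}. c x i \<ge> (0::real)) \<and> (\<Sum>i\<in>J x. c x i) = 1 \<and>
               (\<forall>i\<in>J x. (\<Sum>j\<in>J x. A x i j * c x j) \<ge> a)"
    proof (rule ballI, intro conjI)
      fix x assume x: "x \<in> ?F"
      show "\<forall>i\<in>{1..I}. c x i \<ge> (0::real)" "(\<Sum>i\<in>J x. c x i) = 1" using hc0 x by auto
      show "\<forall>i\<in>J x. (\<Sum>j\<in>J x. A x i j * c x j) \<ge> a"
      proof
        fix i assume i: "i \<in> J x"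
        show "(\<Sum>j\<in>J x. A x i j * c x j) \<ge> a" unfolding r2[OF i] using hc0 x i by fastforce
      qed
    qed
    have "\<forall>x\<in>?F. \<exists>b. (\<forall>i\<in>J x. b i \<ge> 0) \<and> (\<Sum>i\<in>J x. b i) = 1 \<and> (\<forall>j\<in>J x. (\<Sum>i\<in>J x. b i * A x i j) \<ge> a)"
    proof
      fix x assume x: "x \<in> ?F"
      show "\<exists>b. (\<forall>i\<in>J x. b i \<ge> 0) \<and> (\<Sum>i\<in>J x. b i) = 1 \<and> (\<forall>j\<in>J x. (\<Sum>i\<in>J x. b i * A x i j) \<ge> a)"
        apply (rule zmain[OF finJ offA, of x "c x" a])
        using hc x subsetD[OF Jsub[of x]] a by auto
    qed
    from bchoice[OF this] obtain b where hb: "\<forall>x\<in>?F. (\<forall>i\<in>J x. b x i \<ge> 0) \<and> (\<Sum>i\<in>J x. b x i) = 1 \<and> (\<forall>j\<in>J x. (\<Sum>i\<in>J x. b x i * A x i j) \<ge> a)"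
      by blast
    define b' where "b' x i = (if i \<in> J x then b x i else 0)" for x i
    show "\<exists>a b. 0 < a \<and> a < 1 \<and>
            (\<forall>x\<in>?F. (\<forall>i\<in>{1..I}. b x i \<ge> (0::real)) \<and> (\<Sum>i\<in>active_idx I G x. b x i) = 1 \<and>
               (\<forall>i\<in>active_idx I G x. b x i * (n i x \<bullet> \<gamma> i x) \<ge>
                  a + (\<Sum>j\<in>active_idx I G x - {i}. b x j * \<bar>n j x \<bullet> \<gamma> i x\<bar>)))"
    proof (intro exI[of _ a] exI[of _ b'] conjI a, rule ballI, intro conjI)
      fix x assume x: "x \<in> ?F"
      show "\<forall>i\<in>{1..I}. b' x i \<ge> 0" using hb x unfolding b'_def by auto
      show "(\<Sum>i\<in>active_idx I G x. b' x i) = 1" using hb x unfolding b'_def J_def by simp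
      show "\<forall>i\<in>active_idx I G x. b' x i * (n i x \<bullet> \<gamma> i x) \<ge>
                  a + (\<Sum>j\<in>active_idx I G x - {i}. b' x j * \<bar>n j x \<bullet> \<gamma> i x\<bar>)"
      proof
        fix i assume i: "i \<in> active_idx I G x"
        hence iJ: "i \<in> J x" unfolding J_def .
        have "a \<le> (\<Sum>j\<in>J x. b' x j * A x j i)" using hb x iJ unfolding b'_def by simp
        thus "b' x i * (n i x \<bullet> \<gamma> i x) \<ge> a + (\<Sum>j\<in>active_idx I G x - {i}. b' x j * \<bar>n j x \<bullet> \<gamma> i x\<bar>)"
          using r1[OF iJ] unfolding J_def by simp
      qed
    qed
  qed
qed

end
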